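(* For $n\ge 2$, let $\overline{\mathcal M}_{\neq}(n)$ be the number of MAU pairs $(u,v)$ of binary words with $|u|=|v|=n$ and $|u|_c\ne|v|_c$ for some $c\in\{a,b\}$. Then $$\overline{\mathcal M}_{\neq}(n)=2\sum_{r_2=0}^{n-2}\ \sum_{r_1=r_2+2}^{n}{}_{A}N_{O}^{B_{r_2}},$$ where, for each $(r_1,r_2)$, $A=(r_2-r_1,\,r_1-r_2)$, $O=(0,0)$ and $B_{r_2}=(r_2,\,n-r_2)$.
   Context: Let $\Sigma=\{a,b\}$. For a word $w$ and a letter $c$, $|w|_c$ denotes the number of occurrences of $c$ in $w$. Two words $x,y$ are abelian equivalent, written $x\sim_{\mathrm{abl}}y$, if $|x|_c=|y|_c$ for all $c\in\Sigma$. For words $u,v$: a pair $(x,y)$ is an internal abelian-border of $(u,v)$ if $x$ is a nonempty proper suffix of $u$, $y$ is a proper prefix of $v$, and $x\sim_{\mathrm{abl}}y$; it is an external abelian-border of $(u,v)$ if $x$ is a nonempty proper prefix of $u$, $y$ is a proper suffix of $v$, and $x\sim_{\mathrm{abl}}y$. The pair $(u,v)$ is mutually abelian-bordered (MAB) if it has both an internal and an external abelian-border, and mutually abelian-unbordered (MAU) if it has neither. A lattice path is a finite sequence of points of $\mathbb Z^2$ in which each consecutive difference is $(1,0)$ (an east step) or $(0,1)$ (a north step). The word $w(p)\in\Sigma^*$ of a lattice path $p$ records its steps in order, writing $a$ for an east step and $b$ for a north step; conversely, for a point $A\in\mathbb Z^2$ and a word $w$, $p_A(w)$ is the lattice path starting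 at $A$ whose word is $w$. For lattice paths $p,q$, $p\cap q$ denotes the set of lattice points lying on both. For distinct lattice points $A,B,C$, ${}_{A}\mathcal N_{B}^{C}$ is the set of triples $(p,q,p')$ where $p$ is a lattice path from $A$ to $C$, $q$ is a lattice path from $B$ to $C$, $p'=p_B(w(p))$, $p\cap q=\{C\}$ and $q\cap p'=\{B\}$; and ${}_{A}N_{B}^{C}=|{}_{A}\mathcal N_{B}^{C}|$. *)

theory Defs
  imports Main "HOL-Library.Sublist"
begin

datatype letter = La | Lb

definition abl_eq :: "letter list \<Rightarrow> letter list \<Rightarrow> bool" where
  "abl_eq x y \<longleftrightarrow> (\<forall>c. count_list x c = count_list y c)"

definition internal_abl_border :: "letter list \<Rightarrow> letter list \<Rightarrow> letter list \<Rightarrow> letter list \<Rightarrow> bool" where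
  "internal_abl_border u v x y \<longleftrightarrow>
     x \<noteq> [] \<and> strict_suffix x u \<and> strict_prefix y v \<and> abl_eq x y"

definition external_abl_border :: "letter list \<Rightarrow> letter list \<Rightarrow> letter list \<Rightarrow> letter list \<Rightarrow> bool" where
  "external_abl_border u v x y \<longleftrightarrow>
     x \<noteq> [] \<and> strict_prefix x u \<and> strict_suffix y v \<and> abl_eq x y"

definition MAU :: "letter list \<Rightarrow> letter list \<Rightarrow> bool" where
  "MAU u v \<longleftrightarrow> \<not> (\<exists>x y. internal_abl_border u v x y) \<and> \<not> (\<exists>x y. external_abl_border u v x y)"

type_synonym pt = "int \<times> int"

definition east_step :: "pt \<Rightarrow> pt \<Rightarrow> bool" where
  "east_step P Q \<longleftrightarrow> fst Q = fst P + 1 \<and> snd Q = snd P"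

definition north_step :: "pt \<Rightarrow> pt \<Rightarrow> bool" where
  "north_step P Q \<longleftrightarrow> fst Q = fst P \<and> snd Q = snd P + 1"

definition lattice_path :: "pt list \<Rightarrow> bool" where
  "lattice_path p \<longleftrightarrow> p \<noteq> [] \<and>
     (\<forall>i. Suc i < length p \<longrightarrow> east_step (p ! i) (p ! Suc i) \<or> north_step (p ! i) (p ! Suc i))"

definition path_word :: "pt list \<Rightarrow> letter list" where
  "path_word p = map (\<lambda>i. if east_step (p ! i) (p ! Suc i) then La else Lb) [0..<length p - 1]"

fun letter_step :: "pt \<Rightarrow> letter \<Rightarrow> pt" where
  "letter_step (x, y) La = (x + 1, y)"
| "letter_step (x, y) Lb = (x, y + 1)"

fun path_from :: "pt \<Rightarrow> letter list \<Rightarrow> pt list" where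
  "path_from P [] = [P]"
| "path_from P (c # w) = P # path_from (letter_step P c) w"

definition path_between :: "pt \<Rightarrow> pt \<Rightarrow> pt list \<Rightarrow> bool" where
  "path_between P Q p \<longleftrightarrow> lattice_path p \<and> hd p = P \<and> last p = Q"

definition NSet :: "pt \<Rightarrow> pt \<Rightarrow> pt \<Rightarrow> (pt list \<times> pt list \<times> pt list) set" where
  "NSet A B C = {(p, q, p'). path_between A C p \<and> path_between B C q \<and>
       p' = path_from B (path_word p) \<and> set p \<inter> set q = {C} \<and> set q \<inter> set p' = {B}}"

definition NCount :: "pt \<Rightarrow> pt \<Rightarrow> pt \<Rightarrow> nat" where
  "NCount A B C = card (NSet A B C)"

end

theory Submission
  imports Defs
begin


abbreviation ca :: "letter list \<Rightarrow> nat" where "ca w \<equiv> count_list w La"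

definition pt_at :: "pt \<Rightarrow> letter list \<Rightarrow> nat \<Rightarrow> pt" where
  "pt_at P w k = (fst P + int (ca (take k w)), snd P + int k - int (ca (take k w)))"

lemma ca_take_le: "ca (take k w) \<le> k"
  by (metis count_le_length length_take min.bounded_iff nle_le)

lemma pf_length[simp]: "length (path_from P w) = Suc (length w)"
  by (induction w arbitrary: P) auto

lemma pf_nth: "k \<le> length w \<Longrightarrow> path_from P w ! k = pt_at P w k"
proof (induction w arbitrary: P k)
  case Nil
  then show ?case by (simp add: pt_at_def)
next
  case (Cons c w)
  show ?case
  proof (cases k)
    case 0
    then show ?thesis by (simp add: pt_at_def)
  next
    case (Suc k')
    with Cons have "path_from P (c # w) ! k = pt_at (letter_step P c) w k'" by simp
    then show ?thesis using Suc
      by (cases P; cases c) (auto simp: pt_at_def)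
  qed
qed

lemma pf_set: "set (path_from P w) = pt_at P w ` {0..length w}"
proof -
  have "set (path_from P w) = {path_from P w ! i |i. i < Suc (length w)}"
    using set_conv_nth[of "path_from P w"] by simp
  also have "\<dots> = pt_at P w ` {0..length w}"
  proof (intro set_eqI iffI)
    fix z assume "z \<in> {path_from P w ! i |i. i < Suc (length w)}"
    then obtain i where "z = path_from P w ! i" "i \<le> length w" by (auto simp: less_Suc_eq_le)
    then show "z \<in> pt_at P w ` {0..length w}" using pf_nth by auto
  next
    fix z assume "z \<in> pt_at P w ` {0..length w}"
    then obtain i where "z = pt_at P w i" "i \<le> length w" by auto
    then show "z \<in> {path_from P w ! i |i. i < Suc (length w)}" using pf_nth[of i w P]
      by (metis (mono_tags, lifting) le_imp_less_Suc mem_Collect_eq)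
  qed
  finally show ?thesis .
qed

lemma pf_hd[simp]: "hd (path_from P w) = P"
  by (cases w) auto

lemma pf_last: "last (path_from P w) = pt_at P w (length w)"
proof -
  have "path_from P w \<noteq> []" by (cases w) auto
  then show ?thesis by (simp add: last_conv_nth pf_nth)
qed

lemma lattice_path_single[simp]: "lattice_path [x]"
  by (simp add: lattice_path_def)

lemma lattice_path_Cons2:
  "lattice_path (x # y # r) \<longleftrightarrow> (east_step x y \<or> north_step x y) \<and> lattice_path (y # r)"
  unfolding lattice_path_def
  by (auto simp: nth_Cons split: nat.splits)

lemma path_word_single[simp]: "path_word [x] = []"
  by (simp add: path_word_def)

lemma path_word_Cons2:
  "path_word (x # y # r) = (if east_step x y then La else Lb) # path_word (y # r)"
  unfolding path_word_def by (simp add: map_upt_Suc del: upt_Suc)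

lemma pf_Cons2: "path_from P (c # w) = P # letter_step P c # tl (path_from (letter_step P c) w)"
  by (cases w) auto

lemma east_letter: "east_step P (letter_step P c) \<longleftrightarrow> c = La"
  by (cases P; cases c) (auto simp: east_step_def)

lemma north_letter: "north_step P (letter_step P c) \<longleftrightarrow> c = Lb"
  by (cases P; cases c) (auto simp: north_step_def)

lemma pf_tl: "letter_step P c # tl (path_from (letter_step P c) w) = path_from (letter_step P c) w"
  by (cases w) auto

lemma pw_pf[simp]: "path_word (path_from P w) = w"
proof (induction w arbitrary: P)
  case Nil
  then show ?case by simp
next
  case (Cons c w)
  have "path_word (path_from P (c # w)) = (if c = La then La else Lb) # path_word (path_from (letter_step P c) w)"
    by (subst pf_Cons2, subst path_word_Cons2) (simp add: east_letter pf_tl)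
  then show ?case using Cons by (cases c) auto
qed

lemma lp_pf: "lattice_path (path_from P w)"
proof (induction w arbitrary: P)
  case Nil
  then show ?case by simp
next
  case (Cons c w)
  show ?case
    apply (subst pf_Cons2, subst lattice_path_Cons2)
    using Cons[of "letter_step P c"] by (simp add: pf_tl east_letter north_letter, cases c, auto)
qed

lemma lp_recover: "lattice_path p \<Longrightarrow> p = path_from (hd p) (path_word p)"
proof (induction p)
  case Nil
  then show ?case by (simp add: lattice_path_def)
next
  case (Cons x p)
  show ?case
  proof (cases p)
    case Nil
    then show ?thesis by simp
  next
    case (Cons y r)
    with Cons.prems have st: "east_step x y \<or> north_step x y" and lp: "lattice_path (y # r)"
      by (auto simp: lattice_path_Cons2)
    from Cons.IH lp Cons have ih: "y # r = path_from y (path_word (y # r))" by simp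
    define c where "c = (if east_step x y then La else Lb)"
    have "letter_step x c = y" using st
      by (cases x; cases y) (auto simp: c_def east_step_def north_step_def)
    then have "path_from x (c # path_word (y # r)) = x # y # r" using ih by simp
    then show ?thesis using Cons by (simp add: path_word_Cons2 c_def)
  qed
qed

lemma pt_at_sum: "fst (pt_at P w k) + snd (pt_at P w k) = fst P + snd P + int k"
  by (simp add: pt_at_def)



definition Good :: "nat \<Rightarrow> letter list \<Rightarrow> letter list \<Rightarrow> bool" where
  "Good n u v \<longleftrightarrow> (\<forall>k. 1 \<le> k \<and> k \<le> n \<longrightarrow> ca (take k u) \<noteq> ca (take k v)) \<and>
                 (\<forall>k<n. ca (drop k u) \<noteq> ca (drop k v))"

definition W :: "nat \<Rightarrow> nat \<Rightarrow> nat \<Rightarrow> (letter list \<times> letter list) set" where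
  "W n r1 r2 = {(u,v). length u = n \<and> length v = n \<and> ca u = r1 \<and> ca v = r2 \<and> Good n u v}"

lemma pt_eq: "pt_at P w i = pt_at Q w' j \<longleftrightarrow>
   fst P + snd P + int i = fst Q + snd Q + int j \<and> fst P + int (ca (take i w)) = fst Q + int (ca (take j w'))"
  by (auto simp: pt_at_def)

lemma ca_split: "ca (take k u) + ca (drop k u) = ca u"
  by (metis append_take_drop_id count_list_append)

lemma L1:
  assumes lu: "length u = n" and lv: "length v = n" and cu: "ca u = r1" and cv: "ca v = r2"
  shows "set (path_from (int r2 - int r1, int r1 - int r2) u) \<inter> set (path_from (0,0) v) = {(int r2, int n - int r2)}
     \<longleftrightarrow> (\<forall>k<n. ca (drop k u) \<noteq> ca (drop k v))"
proof -
  let ?A = "(int r2 - int r1, int r1 - int r2)" and ?O = "(0::int,0::int)" and ?C = "(int r2, int n - int r2)"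
  have eq: "pt_at ?A u i = pt_at ?O v j \<longleftrightarrow> i = j \<and> ca (drop i u) = ca (drop i v)" if "i \<le> n" "j \<le> n" for i j
  proof -
    have "ca (take i u) + ca (drop i u) = r1" "ca (take i v) + ca (drop i v) = r2"
      using ca_split cu cv by auto
    then show ?thesis by (auto simp: pt_eq)
  qed
  have Cu: "pt_at ?A u n = ?C" using lu cu by (simp add: pt_at_def)
  have Cv: "pt_at ?O v n = ?C" using lv cv by (simp add: pt_at_def)
  show ?thesis
  proof
    assume H: "set (path_from ?A u) \<inter> set (path_from ?O v) = {?C}"
    show "\<forall>k<n. ca (drop k u) \<noteq> ca (drop k v)"
    proof (intro allI impI notI)
      fix k assume k: "k < n" and e: "ca (drop k u) = ca (drop k v)"
      then have "pt_at ?A u k = pt_at ?O v k" using eq by auto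
      moreover have "pt_at ?A u k \<in> set (path_from ?A u)" "pt_at ?O v k \<in> set (path_from ?O v)"
        using k lu lv unfolding pf_set by auto
      ultimately have "pt_at ?A u k \<in> set (path_from ?A u) \<inter> set (path_from ?O v)"
        by simp
      then have "pt_at ?A u k = ?C" using H by auto
      then have "pt_at ?A u k = pt_at ?A u n" using Cu by simp
      then show False using pt_at_sum[of ?A u k] pt_at_sum[of ?A u n] k by simp
    qed
  next
    assume H: "\<forall>k<n. ca (drop k u) \<noteq> ca (drop k v)"
    show "set (path_from ?A u) \<inter> set (path_from ?O v) = {?C}"
    proof (intro set_eqI iffI)
      fix z assume "z \<in> set (path_from ?A u) \<inter> set (path_from ?O v)"
      then obtain i j where ij: "i \<le> n" "j \<le> n" "z = pt_at ?A u i" "z = pt_at ?O v j"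
        using lu lv by (auto simp: pf_set)
      have e: "pt_at ?A u i = pt_at ?O v j" using ij(3,4) by simp
      have "i = j" "ca (drop i u) = ca (drop i v)" using eq[OF ij(1,2)] e by blast+
      then have "i = n" using H ij by (meson le_neq_implies_less)
      then show "z \<in> {?C}" using ij Cu by simp
    next
      fix z assume z: "z \<in> {?C}"
      have "pt_at ?A u n \<in> set (path_from ?A u)" "pt_at ?O v n \<in> set (path_from ?O v)"
        using lu lv unfolding pf_set by auto
      then show "z \<in> set (path_from ?A u) \<inter> set (path_from ?O v)"
        using Cu Cv z by simp
    qed
  qed
qed

lemma L2:
  assumes lu: "length u = n" and lv: "length v = n"
  shows "set (path_from (0,0) v) \<inter> set (path_from (0,0) u) = {(0,0)}
     \<longleftrightarrow> (\<forall>k. 1 \<le> k \<and> k \<le> n \<longrightarrow> ca (take k u) \<noteq> ca (take k v))"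
proof -
  let ?O = "(0::int,0::int)"
  have eq: "pt_at ?O v i = pt_at ?O u j \<longleftrightarrow> i = j \<and> ca (take i u) = ca (take i v)" for i j
    by (auto simp: pt_eq)
  have O: "pt_at ?O w 0 = ?O" for w by (simp add: pt_at_def)
  show ?thesis
  proof
    assume H: "set (path_from ?O v) \<inter> set (path_from ?O u) = {?O}"
    show "\<forall>k. 1 \<le> k \<and> k \<le> n \<longrightarrow> ca (take k u) \<noteq> ca (take k v)"
    proof (intro allI impI notI)
      fix k assume k: "1 \<le> k \<and> k \<le> n" and e: "ca (take k u) = ca (take k v)"
      then have "pt_at ?O v k = pt_at ?O u k" using eq by auto
      moreover have "pt_at ?O u k \<in> set (path_from ?O u)" "pt_at ?O v k \<in> set (path_from ?O v)"
        using k lu lv unfolding pf_set by auto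
      ultimately have "pt_at ?O v k \<in> set (path_from ?O v) \<inter> set (path_from ?O u)"
        by simp
      then have "pt_at ?O v k = ?O" using H by auto
      then show False using pt_at_sum[of ?O v k] k by simp
    qed
  next
    assume H: "\<forall>k. 1 \<le> k \<and> k \<le> n \<longrightarrow> ca (take k u) \<noteq> ca (take k v)"
    show "set (path_from ?O v) \<inter> set (path_from ?O u) = {?O}"
    proof (intro set_eqI iffI)
      fix z assume "z \<in> set (path_from ?O v) \<inter> set (path_from ?O u)"
      then obtain i j where ij: "i \<le> n" "j \<le> n" "z = pt_at ?O v i" "z = pt_at ?O u j"
        using lu lv by (auto simp: pf_set)
      have e: "pt_at ?O v i = pt_at ?O u j" using ij(3,4) by simp
      have "i = j" "ca (take i u) = ca (take i v)" using eq[of i j] e by blast+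
      then have "i = 0" using H ij by (metis One_nat_def less_one not_less)
      then show "z \<in> {?O}" using ij O by simp
    next
      fix z assume "z \<in> {?O}"
      show "z \<in> set (path_from ?O v) \<inter> set (path_from ?O u)"
      proof -
        have "pt_at ?O u 0 \<in> set (path_from ?O u)" "pt_at ?O v 0 \<in> set (path_from ?O v)"
          unfolding pf_set by auto
        then show ?thesis using O \<open>z \<in> {?O}\<close> by simp
      qed
    qed
  qed
qed

lemma NCount_W:
  shows "NCount (int r2 - int r1, int r1 - int r2) (0, 0) (int r2, int n - int r2) = card (W n r1 r2)"
proof -
  let ?A = "(int r2 - int r1, int r1 - int r2)" and ?O = "(0::int,0::int)" and ?C = "(int r2, int n - int r2)"
  define F where "F = (\<lambda>(u,v). (path_from ?A u, path_from ?O v, path_from ?O u))"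
  have inj: "inj_on F (W n r1 r2)"
    by (rule inj_onI) (auto simp: F_def dest: arg_cong[of _ _ path_word])
  have "NSet ?A ?O ?C = F ` W n r1 r2"
  proof (intro set_eqI iffI)
    fix t assume "t \<in> NSet ?A ?O ?C"
    then obtain p q p' where t: "t = (p,q,p')" and pb: "path_between ?A ?C p" and qb: "path_between ?O ?C q"
      and p': "p' = path_from ?O (path_word p)" and d1: "set p \<inter> set q = {?C}" and d2: "set q \<inter> set p' = {?O}"
      unfolding NSet_def by auto
    define u where "u = path_word p"
    define v where "v = path_word q"
    have pu: "p = path_from ?A u" using pb lp_recover unfolding path_between_def u_def by metis
    have qv: "q = path_from ?O v" using qb lp_recover unfolding path_between_def v_def by metis
    have "pt_at ?A u (length u) = ?C" using pb pu pf_last by (metis path_between_def)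
    then have cu: "ca u = r1" and lu: "length u = n" using count_le_length[of u La] by (auto simp: pt_at_def)
    have "pt_at ?O v (length v) = ?C" using qb qv pf_last by (metis path_between_def)
    then have cv: "ca v = r2" and lv: "length v = n" using count_le_length[of v La] by (auto simp: pt_at_def)
    have "Good n u v"
      unfolding Good_def using L1[OF lu lv cu cv] L2[OF lu lv] d1 d2 pu qv p' unfolding u_def[symmetric] by auto
    then have "(u,v) \<in> W n r1 r2" using lu lv cu cv by (simp add: W_def)
    moreover have "p' = path_from ?O u" using p' u_def by simp
    then have "t = F (u,v)" using t pu qv by (simp add: F_def)
    ultimately show "t \<in> F ` W n r1 r2" by blast
  next
    fix t assume "t \<in> F ` W n r1 r2"
    then obtain u v where t: "t = F (u,v)" and lu: "length u = n" and lv: "length v = n"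
      and cu: "ca u = r1" and cv: "ca v = r2" and G: "Good n u v" by (auto simp: W_def)
    have "pt_at ?A u (length u) = ?C" "pt_at ?O v (length v) = ?C"
      using lu lv cu cv by (auto simp: pt_at_def)
    then show "t \<in> NSet ?A ?O ?C"
      using t L1[OF lu lv cu cv] L2[OF lu lv] G
      by (simp add: F_def NSet_def path_between_def lp_pf pf_last Good_def)
  qed
  then show ?thesis unfolding NCount_def using card_image[OF inj] by simp
qed



lemma len_ab: "length x = ca x + count_list x Lb"
proof (induction x)
  case Nil then show ?case by simp
next
  case (Cons a x) then show ?case by (cases a) auto
qed

lemma abl_iff: "abl_eq x y \<longleftrightarrow> length x = length y \<and> ca x = ca y"
proof
  assume "abl_eq x y"
  then show "length x = length y \<and> ca x = ca y"
    unfolding abl_eq_def using len_ab[of x] len_ab[of y] by simp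
next
  assume H: "length x = length y \<and> ca x = ca y"
  then have "count_list x Lb = count_list y Lb" using len_ab[of x] len_ab[of y] by simp
  then show "abl_eq x y" unfolding abl_eq_def
  proof (intro allI)
    fix c show "count_list x c = count_list y c"
      using H \<open>count_list x Lb = count_list y Lb\<close> by (cases c) auto
  qed
qed

lemma ssuf: "strict_suffix x u \<longleftrightarrow> (\<exists>j. 0 < j \<and> j \<le> length u \<and> x = drop j u)"
proof
  assume "strict_suffix x u"
  then obtain zs where "u = zs @ x" "x \<noteq> u"
    unfolding strict_suffix_def suffix_def by auto
  then have "zs \<noteq> []" by auto
  then show "\<exists>j. 0 < j \<and> j \<le> length u \<and> x = drop j u" using \<open>u = zs @ x\<close> by (intro exI[of _ "length zs"]) auto
next
  assume "\<exists>j. 0 < j \<and> j \<le> length u \<and> x = drop j u"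
  then obtain j where "0 < j" "j \<le> length u" "x = drop j u" by auto
  moreover then have "length x < length u" by simp
  moreover then have "x \<noteq> u" by auto
  ultimately show "strict_suffix x u" unfolding strict_suffix_def using suffix_drop by auto
qed

lemma spre: "strict_prefix y v \<longleftrightarrow> (\<exists>k<length v. y = take k v)"
proof
  assume "strict_prefix y v"
  then obtain zs where "v = y @ zs" "zs \<noteq> []"
    unfolding strict_prefix_def prefix_def by auto
  then show "\<exists>k<length v. y = take k v" by (intro exI[of _ "length y"]) auto
next
  assume "\<exists>k<length v. y = take k v"
  then obtain k where "k < length v" "y = take k v" by auto
  moreover then have "length y < length v" by simp
  moreover then have "y \<noteq> v" by auto
  ultimately show "strict_prefix y v" unfolding strict_prefix_def using take_is_prefix by auto
qed

lemma intern:
  assumes lu: "length u = n" and lv: "length v = n"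
  shows "(\<exists>x y. internal_abl_border u v x y) \<longleftrightarrow> (\<exists>m. 1 \<le> m \<and> m < n \<and> ca (drop m u) = ca (drop m (rev v)))"
proof
  assume "\<exists>x y. internal_abl_border u v x y"
  then obtain x y where "x \<noteq> []" "strict_suffix x u" "strict_prefix y v" "abl_eq x y"
    unfolding internal_abl_border_def by auto
  then obtain j k where jk: "j \<le> n" "x = drop j u" "k < n" "y = take k v" "length x = length y" "ca x = ca y" "x \<noteq> []"
    using lu lv by (auto simp: ssuf spre abl_iff)
  then have "j < n" using lu by auto
  then have "k = n - j" using jk lu lv by simp
  then have "1 \<le> j" using jk by simp
  moreover have "ca (drop j (rev v)) = ca y" using jk lv \<open>k = n - j\<close> by (simp add: drop_rev)
  ultimately show "\<exists>m. 1 \<le> m \<and> m < n \<and> ca (drop m u) = ca (drop m (rev v))" using jk \<open>j < n\<close> by auto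
next
  assume "\<exists>m. 1 \<le> m \<and> m < n \<and> ca (drop m u) = ca (drop m (rev v))"
  then obtain m where m: "1 \<le> m" "m < n" "ca (drop m u) = ca (drop m (rev v))" by auto
  have r: "ca (drop m (rev v)) = ca (take (n - m) v)" using lv by (simp add: drop_rev)
  have "drop m u \<noteq> []" using m lu by simp
  moreover have "strict_suffix (drop m u) u" unfolding ssuf using m lu by (intro exI[of _ m]) auto
  moreover have "strict_prefix (take (n - m) v) v" unfolding spre using m lv
    by (intro exI[of _ "n - m"]) auto
  moreover have "abl_eq (drop m u) (take (n - m) v)" unfolding abl_iff using m lu lv r by simp
  ultimately have "internal_abl_border u v (drop m u) (take (n - m) v)"
    unfolding internal_abl_border_def by blast
  then show "\<exists>x y. internal_abl_border u v x y" by blast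
qed

lemma extern:
  assumes lu: "length u = n" and lv: "length v = n"
  shows "(\<exists>x y. external_abl_border u v x y) \<longleftrightarrow> (\<exists>m. 1 \<le> m \<and> m < n \<and> ca (take m u) = ca (take m (rev v)))"
proof
  assume "\<exists>x y. external_abl_border u v x y"
  then obtain x y where xy: "x \<noteq> []" "strict_prefix x u" "strict_suffix y v" "abl_eq x y"
    unfolding external_abl_border_def by auto
  from xy(2) obtain j where j: "j < n" "x = take j u" using lu by (auto simp: spre)
  from xy(3) obtain k where k: "k \<le> n" "y = drop k v" using lv by (auto simp: ssuf)
  from xy(4) have "length x = length y" "ca x = ca y" by (auto simp: abl_iff)
  then have jk: "j < n" "x = take j u" "k \<le> n" "y = drop k v" "length x = length y" "ca x = ca y" "x \<noteq> []"
    using j k xy by auto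
  then have "j = n - k" using jk lu lv by simp
  then have "1 \<le> j" using jk by (cases j) auto
  moreover have "ca (take j (rev v)) = ca y" using jk lv \<open>j = n - k\<close> by (simp add: take_rev)
  ultimately show "\<exists>m. 1 \<le> m \<and> m < n \<and> ca (take m u) = ca (take m (rev v))" using jk by auto
next
  assume "\<exists>m. 1 \<le> m \<and> m < n \<and> ca (take m u) = ca (take m (rev v))"
  then obtain m where m: "1 \<le> m" "m < n" "ca (take m u) = ca (take m (rev v))" by auto
  have r: "ca (take m (rev v)) = ca (drop (n - m) v)" using lv by (simp add: take_rev)
  have "take m u \<noteq> []" using m lu by (cases u) auto
  moreover have "strict_prefix (take m u) u" unfolding spre using m lu by auto
  moreover have "strict_suffix (drop (n - m) v) v" unfolding ssuf using m lv
    by (intro exI[of _ "n - m"]) auto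
  moreover have "abl_eq (take m u) (drop (n - m) v)" unfolding abl_iff using m lu lv r by simp
  ultimately have "external_abl_border u v (take m u) (drop (n - m) v)"
    unfolding external_abl_border_def by blast
  then show "\<exists>x y. external_abl_border u v x y" by blast
qed

definition MAUc :: "nat \<Rightarrow> letter list \<Rightarrow> letter list \<Rightarrow> bool" where
  "MAUc n u w \<longleftrightarrow> (\<forall>m. 1 \<le> m \<and> m < n \<longrightarrow> ca (drop m u) \<noteq> ca (drop m w) \<and> ca (take m u) \<noteq> ca (take m w))"

lemma MAU_iff:
  assumes "length u = n" "length v = n"
  shows "MAU u v \<longleftrightarrow> MAUc n u (rev v)"
  unfolding MAU_def intern[OF assms] extern[OF assms] MAUc_def by blast

lemma Good_iff:
  assumes lu: "length u = n" and lw: "length w = n" and n1: "n \<ge> 1"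
  shows "Good n u w \<longleftrightarrow> MAUc n u w \<and> ca u \<noteq> ca w"
proof -
  have a: "(\<forall>k. 1 \<le> k \<and> k \<le> n \<longrightarrow> P k) \<longleftrightarrow> (\<forall>k. 1 \<le> k \<and> k < n \<longrightarrow> P k) \<and> (1 \<le> n \<longrightarrow> P n)" for P
    by (auto, metis le_neq_implies_less)
  have b: "(\<forall>k<n. Q k) \<longleftrightarrow> (\<forall>k. 1 \<le> k \<and> k < n \<longrightarrow> Q k) \<and> (0 < n \<longrightarrow> Q 0)" for Q
  proof
    assume "\<forall>k<n. Q k" then show "(\<forall>k. 1 \<le> k \<and> k < n \<longrightarrow> Q k) \<and> (0 < n \<longrightarrow> Q 0)" by auto
  next
    assume H: "(\<forall>k. 1 \<le> k \<and> k < n \<longrightarrow> Q k) \<and> (0 < n \<longrightarrow> Q 0)"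
    show "\<forall>k<n. Q k"
    proof (intro allI impI)
      fix k assume "k < n" then show "Q k" using H by (cases k) auto
    qed
  qed
  show ?thesis
    unfolding Good_def MAUc_def a b using lu lw n1
    by auto
qed

lemma sign_down:
  fixes f :: "nat \<Rightarrow> int"
  assumes "\<forall>i. a \<le> i \<and> i < b \<longrightarrow> \<bar>f (Suc i) - f i\<bar> \<le> 1"
    and "\<forall>i. a \<le> i \<and> i \<le> b \<longrightarrow> f i \<noteq> 0" and "a \<le> b" and "f b > 0"
  shows "f a > 0"
  using assms
proof (induction b)
  case 0
  then show ?case by simp
next
  case (Suc b)
  show ?case
  proof (cases "a = Suc b")
    case True
    then show ?thesis using Suc by simp
  next
    case False
    then have ab: "a \<le> b" using Suc by simp
    have "\<bar>f (Suc b) - f b\<bar> \<le> 1" "f b \<noteq> 0" using Suc.prems ab by auto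
    then have "f b > 0" using Suc.prems by linarith
    then show ?thesis using Suc ab by auto
  qed
qed

lemma sign_up:
  fixes f :: "nat \<Rightarrow> int"
  assumes "\<forall>i. a \<le> i \<and> i < b \<longrightarrow> \<bar>f (Suc i) - f i\<bar> \<le> 1"
    and "\<forall>i. a \<le> i \<and> i \<le> b \<longrightarrow> f i \<noteq> 0" and "a \<le> b" and "f a > 0"
  shows "f b > 0"
  using assms
proof (induction b)
  case 0
  then show ?case by simp
next
  case (Suc b)
  show ?case
  proof (cases "a = Suc b")
    case True
    then show ?thesis using Suc by simp
  next
    case False
    then have ab: "a \<le> b" using Suc by simp
    have "f b > 0" using Suc ab by auto
    moreover have "\<bar>f (Suc b) - f b\<bar> \<le> 1" "f (Suc b) \<noteq> 0" using Suc.prems ab by auto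
    ultimately show ?thesis by linarith
  qed
qed

lemma ca_take_step:
  assumes "k < length u"
  shows "ca (take (Suc k) u) = ca (take k u) \<or> ca (take (Suc k) u) = ca (take k u) + 1"
  using assms by (simp add: take_Suc_conv_app_nth)

lemma gap2:
  assumes lu: "length u = n" and lw: "length w = n" and n2: "n \<ge> 2"
    and M: "MAUc n u w" and lt: "ca w < ca u"
  shows "ca w + 2 \<le> ca u"
proof -
  define d where "d k = int (ca (take k u)) - int (ca (take k w))" for k
  define D where "D = int (ca u) - int (ca w)"
  define e where "e k = D - d k" for k
  have step: "\<bar>d (Suc i) - d i\<bar> \<le> 1" if "i < n" for i
    using ca_take_step[of i u] ca_take_step[of i w] that lu lw unfolding d_def by auto
  have estep: "\<bar>e (Suc i) - e i\<bar> \<le> 1" if "i < n" for i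
    using step[OF that] unfolding e_def by simp
  have dn: "d n = D" using lu lw by (simp add: d_def D_def)
  have Dpos: "D > 0" using lt by (simp add: D_def)
  have edrop: "e k = int (ca (drop k u)) - int (ca (drop k w))" for k
    using ca_split[of k u] ca_split[of k w] unfolding e_def D_def d_def by linarith
  have dnz: "d i \<noteq> 0" if "1 \<le> i" "i \<le> n" for i
  proof (cases "i = n")
    case True then show ?thesis using dn Dpos by simp
  next
    case False then show ?thesis using M that unfolding MAUc_def d_def by auto
  qed
  have enz: "e i \<noteq> 0" if "i \<le> n - 1" for i
  proof (cases "i = 0")
    case True then show ?thesis using Dpos by (simp add: e_def d_def)
  next
    case False then show ?thesis using M that n2 unfolding MAUc_def edrop by auto
  qed
  have d1: "d (n - 1) > 0"
    by (rule sign_down[where b = n]) (use step dnz dn Dpos n2 in auto)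
  have e1: "e (n - 1) > 0"
    by (rule sign_up[where a = 0]) (use estep enz Dpos n2 in \<open>auto simp: e_def d_def\<close>)
  have "D = d (n - 1) + e (n - 1)" by (simp add: e_def)
  then have "D \<ge> 2" using d1 e1 by linarith
  then show ?thesis by (simp add: D_def)
qed



lemma UNIV_letter: "(UNIV :: letter set) = {La, Lb}"
  using letter.exhaust by auto

lemma fin_len: "finite {xs :: letter list. length xs = n}"
proof -
  have "{xs :: letter list. length xs = n} = {xs. set xs \<subseteq> UNIV \<and> length xs = n}" by simp
  then show ?thesis using finite_lists_length_eq[of "UNIV :: letter set" n] by (simp add: UNIV_letter)
qed

lemma fin_pairs: "finite {(u :: letter list, v :: letter list). length u = n \<and> length v = (n::nat) \<and> P u v}"
proof -
  have "{(u, v). length u = n \<and> length v = n \<and> P u v} \<subseteq> {xs :: letter list. length xs = n} \<times> {xs. length xs = n}"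
    by auto
  then show ?thesis using finite_subset fin_len by blast
qed

lemma fin_W: "finite (W n r1 r2)"
proof -
  have "W n r1 r2 \<subseteq> {xs :: letter list. length xs = n} \<times> {xs. length xs = n}"
    by (auto simp: W_def)
  then show ?thesis using finite_subset fin_len by blast
qed

lemma MAU_sym: "MAU u v \<longleftrightarrow> MAU v u"
proof -
  have i: "internal_abl_border u v x y \<longleftrightarrow> external_abl_border v u y x" for u v x y
    unfolding internal_abl_border_def external_abl_border_def abl_iff by auto
  show ?thesis unfolding MAU_def using i by metis
qed

lemma diff_iff:
  assumes "length u = length v"
  shows "(\<exists>c. count_list u c \<noteq> count_list v c) \<longleftrightarrow> ca u \<noteq> ca v"
proof
  assume "\<exists>c. count_list u c \<noteq> count_list v c"
  then obtain c where c: "count_list u c \<noteq> count_list v c" by auto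
  show "ca u \<noteq> ca v"
  proof
    assume "ca u = ca v"
    then have "count_list u Lb = count_list v Lb" using len_ab[of u] len_ab[of v] assms by simp
    then show False using c \<open>ca u = ca v\<close> by (cases c) auto
  qed
qed auto

lemma Tw_char:
  assumes lu: "length u = n" and lv: "length v = n" and n2: "n \<ge> 2"
  shows "(MAU u v \<and> ca v < ca u) \<longleftrightarrow> (Good n u (rev v) \<and> ca (rev v) + 2 \<le> ca u)"
proof -
  have lr: "length (rev v) = n" using lv by simp
  have "MAU u v \<longleftrightarrow> MAUc n u (rev v)" using MAU_iff[OF lu lv] .
  moreover have "Good n u (rev v) \<longleftrightarrow> MAUc n u (rev v) \<and> ca u \<noteq> ca (rev v)"
    using Good_iff[OF lu lr] n2 by simp
  moreover have "MAUc n u (rev v) \<Longrightarrow> ca v < ca u \<Longrightarrow> ca v + 2 \<le> ca u"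
    using gap2[OF lu lr n2] by simp
  ultimately show ?thesis by auto
qed

theorem mainTheorem12:
  fixes n :: nat
  assumes "n \<ge> 2"
  shows "card {(u, v). length u = n \<and> length v = n \<and> MAU u v \<and>
                 (\<exists>c. count_list u c \<noteq> count_list v c)}
       = 2 * (\<Sum>r2 = 0..n - 2. \<Sum>r1 = r2 + 2..n.
               NCount (int r2 - int r1, int r1 - int r2) (0, 0) (int r2, int n - int r2))"
proof -
  define M where "M = {(u, v). length u = n \<and> length v = n \<and> MAU u v \<and>
                 (\<exists>c. count_list u c \<noteq> count_list v c)}"
  define T where "T = {(u, v). length u = n \<and> length v = n \<and> MAU u v \<and> ca v < ca u}"
  define Tw where "Tw = {(u, w). length u = n \<and> length w = n \<and> Good n u w \<and> ca w + 2 \<le> ca u}"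
  have finT: "finite T" unfolding T_def by (rule fin_pairs)
  have M_eq: "M = T \<union> prod.swap ` T"
  proof (intro set_eqI iffI)
    fix z assume "z \<in> M"
    then obtain u v where z0: "z = (u,v)" "length u = n" "length v = n" "MAU u v"
      "\<exists>c. count_list u c \<noteq> count_list v c"
      unfolding M_def by auto
    then have z: "z = (u,v)" "length u = n" "length v = n" "MAU u v" "ca u \<noteq> ca v"
      using diff_iff[of u v] by auto
    show "z \<in> T \<union> prod.swap ` T"
    proof (cases "ca v < ca u")
      case True then show ?thesis using z by (auto simp: T_def)
    next
      case False
      then have "(v,u) \<in> T" using z MAU_sym by (auto simp: T_def)
      then have "prod.swap (v,u) \<in> prod.swap ` T" by (rule imageI)
      then show ?thesis using z by simp
    qed
  next
    fix z assume "z \<in> T \<union> prod.swap ` T"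
    have "\<exists>u v. (z = (u,v) \<or> z = (v,u)) \<and> length u = n \<and> length v = n \<and> MAU u v \<and> ca v < ca u"
    proof (cases "z \<in> T")
      case True
      then show ?thesis by (cases z) (auto simp: T_def)
    next
      case False
      then obtain y where "y \<in> T" "z = prod.swap y" using \<open>z \<in> T \<union> prod.swap ` T\<close> by blast
      then show ?thesis by (cases y) (auto simp: T_def)
    qed
    then obtain u v where z: "z = (u,v) \<or> z = (v,u)" and uv: "length u = n" "length v = n" "MAU u v" "ca v < ca u"
      by blast
    have d1: "\<exists>c. count_list u c \<noteq> count_list v c" using diff_iff[of u v] uv by simp
    have d2: "\<exists>c. count_list v c \<noteq> count_list u c" using d1 by (simp add: eq_commute)
    have m2: "MAU v u" using uv(3) MAU_sym by blast
    show "z \<in> M" unfolding M_def using z uv d1 d2 m2 by auto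
  qed
  have disj: "T \<inter> prod.swap ` T = {}"
  proof (rule ccontr)
    assume "T \<inter> prod.swap ` T \<noteq> {}"
    then obtain y where y: "y \<in> T" "prod.swap y \<in> T" by blast
    obtain a b where "y = (a,b)" by (cases y)
    then show False using y by (simp add: T_def)
  qed
  have "card (prod.swap ` T) = card T"
    by (rule card_image[OF inj_swap])
  then have cM: "card M = 2 * card T"
    using M_eq card_Un_disjoint[OF finT _ disj] finT by simp
  have T_eq: "T = (\<lambda>(u,w). (u, rev w)) ` Tw"
  proof (intro set_eqI iffI)
    fix z assume "z \<in> T"
    then obtain u v where z: "z = (u,v)" "length u = n" "length v = n" "MAU u v" "ca v < ca u"
      by (auto simp: T_def)
    then have "(u, rev v) \<in> Tw" using Tw_char[OF z(2,3) assms] by (auto simp: Tw_def)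
    then show "z \<in> (\<lambda>(u,w). (u, rev w)) ` Tw" using z by (auto simp: image_iff intro!: bexI[of _ "(u, rev v)"])
  next
    fix z assume "z \<in> (\<lambda>(u,w). (u, rev w)) ` Tw"
    then obtain u w where z: "z = (u, rev w)" "length u = n" "length w = n" "Good n u w" "ca w + 2 \<le> ca u"
      by (auto simp: Tw_def)
    then have "MAU u (rev w) \<and> ca (rev w) < ca u" using Tw_char[of u n "rev w"] assms by simp
    then show "z \<in> T" using z by (auto simp: T_def)
  qed
  have "inj_on (\<lambda>(u,w). (u, rev w)) Tw" by (auto intro: inj_onI)
  then have cT: "card T = card Tw" using T_eq card_image by blast
  have Tw_eq: "Tw = (\<Union>r2\<in>{0..n-2}. \<Union>r1\<in>{r2+2..n}. W n r1 r2)"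
  proof (intro set_eqI iffI)
    fix z assume "z \<in> Tw"
    then obtain u w where z: "z = (u, w)" "length u = n" "length w = n" "Good n u w" "ca w + 2 \<le> ca u"
      by (auto simp: Tw_def)
    have "ca u \<le> n" using count_le_length[of u La] z by simp
    then have "ca w \<in> {0..n-2}" "ca u \<in> {ca w + 2..n}" using z by auto
    moreover have "z \<in> W n (ca u) (ca w)" using z by (simp add: W_def)
    ultimately show "z \<in> (\<Union>r2\<in>{0..n-2}. \<Union>r1\<in>{r2+2..n}. W n r1 r2)" by blast
  next
    fix z assume "z \<in> (\<Union>r2\<in>{0..n-2}. \<Union>r1\<in>{r2+2..n}. W n r1 r2)"
    then show "z \<in> Tw" by (auto simp: W_def Tw_def)
  qed
  have inner: "card (\<Union>r1\<in>{r2+2..n}. W n r1 r2) = (\<Sum>r1 = r2 + 2..n. card (W n r1 r2))" for r2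
    by (rule card_UN_disjoint) (simp, simp add: fin_W, auto simp: W_def)
  have outer: "card (\<Union>r2\<in>{0..n-2}. \<Union>r1\<in>{r2+2..n}. W n r1 r2) =
      (\<Sum>r2 = 0..n-2. card (\<Union>r1\<in>{r2+2..n}. W n r1 r2))"
    by (rule card_UN_disjoint) (simp, simp add: fin_W, auto simp: W_def)
  have "card M = 2 * (\<Sum>r2 = 0..n-2. \<Sum>r1 = r2 + 2..n. card (W n r1 r2))"
    using cM cT Tw_eq outer inner by simp
  then show ?thesis unfolding M_def by (simp add: NCount_W)
qed

end
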